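(* Let $\phi$ be a flow of a compact metric space $X$. If $\phi$ is expansive on $X\setminus Sing(\phi)$, then $Sing(\phi)$ is dynamically isolated.
   Context: A flow is a continuous $\phi:\mathbb{R}\times X\to X$ with $\phi_0=\mathrm{id}$, $\phi_{t+s}=\phi_t\circ\phi_s$; $\phi_I(x)=\{\phi_t(x):t\in I\}$; $Sing(\phi)$ is the set of fixed points. $\phi$ is expansive on $\Lambda\subset X$ if for every $\epsilon>0$ there is $\delta>0$ such that whenever $x,y\in\Lambda$ and a continuous $s:\mathbb{R}\to\mathbb{R}$ with $s(0)=0$ satisfy $d(\phi_t(x),\phi_{s(t)}(y))\le\delta$ for all $t$, then $y\in\phi_{[-\epsilon,\epsilon]}(x)$. A compact invariant set $K$ is dynamically isolated if there is a neighborhood $U$ of $K$ with $K=\bigcap_{t\in\mathbb{R}}\phi_t(U)$. *)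

theory Defs
  imports "HOL-Analysis.Analysis"
begin

text \<open>A flow on the metric space given by the type 'a (the whole space X = UNIV).\<close>
definition is_flow :: "(real \<Rightarrow> 'a::metric_space \<Rightarrow> 'a) \<Rightarrow> bool" where
  "is_flow \<phi> \<longleftrightarrow> continuous_on UNIV (\<lambda>(t, x). \<phi> t x) \<and> \<phi> 0 = id \<and>
     (\<forall>t s. \<phi> (t + s) = \<phi> t \<circ> \<phi> s)"

definition Sing :: "(real \<Rightarrow> 'a \<Rightarrow> 'a) \<Rightarrow> 'a set" where
  "Sing \<phi> = {x. \<forall>t. \<phi> t x = x}"

definition expansive_on :: "(real \<Rightarrow> 'a::metric_space \<Rightarrow> 'a) \<Rightarrow> 'a set \<Rightarrow> bool" where
  "expansive_on \<phi> \<Lambda> \<longleftrightarrow>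
     (\<forall>\<epsilon>>0. \<exists>\<delta>>0. \<forall>x\<in>\<Lambda>. \<forall>y\<in>\<Lambda>. \<forall>s :: real \<Rightarrow> real.
        continuous_on UNIV s \<and> s 0 = 0 \<and> (\<forall>t. dist (\<phi> t x) (\<phi> (s t) y) \<le> \<delta>)
        \<longrightarrow> y \<in> (\<lambda>t. \<phi> t x) ` {-\<epsilon>..\<epsilon>})"

definition invariant_set :: "(real \<Rightarrow> 'a \<Rightarrow> 'a) \<Rightarrow> 'a set \<Rightarrow> bool" where
  "invariant_set \<phi> K \<longleftrightarrow> (\<forall>t. \<phi> t ` K = K)"

definition dynamically_isolated :: "(real \<Rightarrow> 'a::metric_space \<Rightarrow> 'a) \<Rightarrow> 'a set \<Rightarrow> bool" where
  "dynamically_isolated \<phi> K \<longleftrightarrow> compact K \<and> invariant_set \<phi> K \<and>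
     (\<exists>U. K \<subseteq> interior U \<and> K = (\<Inter>t. \<phi> t ` U))"

end

theory Submission
  imports Defs
begin

lemma infdist_lessE:
  assumes "A \<noteq> {}" "infdist x A < e"
  shows "\<exists>a\<in>A. dist x a < e"
proof -
  have "(INF a\<in>A. dist x a) < e" using assms by (simp add: infdist_notempty)
  moreover have "bdd_below ((\<lambda>a. dist x a) ` A)" by (rule bdd_belowI[where m=0]) auto
  ultimately show ?thesis using assms(1) by (simp add: cINF_less_iff)
qed

locale flw =
  fixes \<phi> :: "real \<Rightarrow> 'a::metric_space \<Rightarrow> 'a"
  assumes fl: "is_flow \<phi>"
begin

lemma cont: "continuous_on UNIV (\<lambda>(t, x). \<phi> t x)" using fl by (simp add: is_flow_def)

lemma zero[simp]: "\<phi> 0 x = x" using fl by (simp add: is_flow_def)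

lemma add: "\<phi> (t + s) x = \<phi> t (\<phi> s x)" using fl by (simp add: is_flow_def)

lemma inv1[simp]: "\<phi> (-t) (\<phi> t x) = x"
  by (metis add zero add.commute add.right_inverse)

lemma inv2[simp]: "\<phi> t (\<phi> (-t) x) = x"
  by (metis inv1 minus_minus)

lemma comm: "\<phi> t (\<phi> s x) = \<phi> s (\<phi> t x)"
  by (metis add add.commute)

lemma cont_t: "continuous_on UNIV (\<phi> t)"
proof -
  have "continuous_on UNIV ((\<lambda>(t, x). \<phi> t x) \<circ> (\<lambda>x. (t, x)))"
    by (rule continuous_on_compose) (auto intro!: continuous_intros cont[THEN continuous_on_subset])
  thus ?thesis by (simp add: o_def)
qed

lemma closed_Sing: "closed (Sing \<phi>)"
proof -
  have "Sing \<phi> = (\<Inter>t. {x. \<phi> t x = id x})" by (auto simp: Sing_def)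
  moreover have "closed {x. \<phi> t x = id x}" for t
    by (rule closed_Collect_eq) (auto intro: cont_t continuous_on_id)
  ultimately show ?thesis by auto
qed

lemma notSing: "y \<notin> Sing \<phi> \<Longrightarrow> \<phi> c y \<notin> Sing \<phi>"
proof
  assume "y \<notin> Sing \<phi>" "\<phi> c y \<in> Sing \<phi>"
  hence "\<phi> t (\<phi> c y) = \<phi> c y" for t by (simp add: Sing_def)
  hence "\<phi> t y = y" for t by (metis comm inv1)
  thus False using \<open>y \<notin> Sing \<phi>\<close> by (simp add: Sing_def)
qed

lemma periodic_nat: "\<phi> P y = y \<Longrightarrow> \<phi> (P * real n) y = y"
proof (induction n)
  case 0 then show ?case by simp
next
  case (Suc n)
  have "\<phi> (P * real (Suc n)) y = \<phi> P (\<phi> (P * real n) y)"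
    by (simp add: add[symmetric] algebra_simps)
  then show ?case using Suc by simp
qed

lemma periodic_int: assumes "\<phi> P y = y" shows "\<phi> (P * of_int k) y = y"
proof (cases k rule: int_cases)
  case (nonneg n) then show ?thesis using periodic_nat[OF assms] by simp
next
  case (neg n)
  have "\<phi> (P * real (Suc n)) y = y" using periodic_nat[OF assms] .
  hence "\<phi> (-(P * real (Suc n))) y = y" by (metis inv1)
  moreover have "of_int k = - real (Suc n)" using neg by simp
  hence "P * of_int k = -(P * real (Suc n))" by (metis mult_minus_right)
  ultimately show ?thesis by simp
qed

lemma periodic_orbit:
  assumes "\<phi> P y = y" "P > 0"
  shows "\<exists>c\<in>{0..P}. \<phi> t y = \<phi> c y"
proof -
  define k where "k = \<lfloor>t / P\<rfloor>"
  define c where "c = t - P * of_int k"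
  have "of_int k \<le> t / P" "t / P < of_int k + 1" unfolding k_def by linarith+
  hence "P * of_int k \<le> t" "t < P * of_int k + P" using assms(2)
    by (simp_all add: field_simps)
  hence "c \<in> {0..P}" unfolding c_def by auto
  moreover have "\<phi> t y = \<phi> c (\<phi> (P * of_int k) y)" unfolding c_def by (simp add: add[symmetric])
  ultimately show ?thesis using periodic_int[OF assms(1)] by auto
qed

end

lemma motion:
  assumes fl: "is_flow \<phi>" and cpt: "compact (UNIV :: 'a set)"
    and ne: "Sing \<phi> \<noteq> {}" and \<rho>: "\<rho> > 0"
  shows "\<exists>\<eta>>0. \<forall>z. infdist z (Sing \<phi>) < \<eta> \<longrightarrow> (\<forall>c\<in>{0..4}. dist (\<phi> c z) (z::'a::metric_space) < \<rho>)"
proof -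
  interpret flw \<phi> by (rule flw.intro[OF fl])
  let ?S = "{0..4::real} \<times> (UNIV::'a set)"
  have "compact ?S" using cpt by (intro compact_Times) auto
  moreover have "continuous_on ?S (\<lambda>(t,x). \<phi> t x)" using cont continuous_on_subset by blast
  ultimately have uc: "uniformly_continuous_on ?S (\<lambda>(t,x). \<phi> t x)"
    by (intro compact_uniformly_continuous)
  have "\<rho>/2 > 0" using \<rho> by simp
  then obtain d where d: "d>0" "\<forall>x\<in>?S. \<forall>x'\<in>?S. dist x' x < d \<longrightarrow>
       dist ((\<lambda>(t,x). \<phi> t x) x') ((\<lambda>(t,x). \<phi> t x) x) < \<rho>/2"
    using uc unfolding uniformly_continuous_on_def by blast
  show ?thesis
  proof (intro exI[of _ "min d (\<rho>/2)"] conjI allI impI ballI)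
    show "min d (\<rho>/2) > 0" using d \<rho> by simp
    fix z c assume z: "infdist z (Sing \<phi>) < min d (\<rho>/2)" and c: "c \<in> {0..4::real}"
    obtain p where p: "p \<in> Sing \<phi>" "dist z p < min d (\<rho>/2)" using infdist_lessE[OF ne z] by blast
    have "dist (c,z) (c,p) < d" using p by (simp add: dist_Pair_Pair)
    hence "dist (\<phi> c z) (\<phi> c p) < \<rho>/2" using d(2) c by force
    moreover have "\<phi> c p = p" using p by (simp add: Sing_def)
    ultimately have "dist (\<phi> c z) p < \<rho>/2" by simp
    moreover have "dist (\<phi> c z) z \<le> dist (\<phi> c z) p + dist z p" by (rule dist_triangle2)
    ultimately show "dist (\<phi> c z) z < \<rho>" using p(2) by linarith
  qed
qed

theorem mainTheorem13:
  fixes \<phi> :: "real \<Rightarrow> 'a::metric_space \<Rightarrow> 'a"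
  assumes "compact (UNIV :: 'a set)"
    and "is_flow \<phi>"
    and "expansive_on \<phi> (UNIV - Sing \<phi>)"
  shows "dynamically_isolated \<phi> (Sing \<phi>)"
proof -
  interpret flw \<phi> by (rule flw.intro[OF assms(2)])
  have cS: "compact (Sing \<phi>)" using compact_Int_closed[OF assms(1) closed_Sing] by simp
  have inv: "invariant_set \<phi> (Sing \<phi>)" unfolding invariant_set_def
  proof
    fix t
    have "\<phi> t ` Sing \<phi> = id ` Sing \<phi>" by (intro image_cong) (auto simp: Sing_def)
    thus "\<phi> t ` Sing \<phi> = Sing \<phi>" by simp
  qed
  have key: "\<exists>U. Sing \<phi> \<subseteq> interior U \<and> Sing \<phi> = (\<Inter>t. \<phi> t ` U)"
  proof (cases "Sing \<phi> = {}")
    case True then show ?thesis by (intro exI[of _ "{}"]) auto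
  next
    case ne: False
    have claim: "\<exists>\<eta>>0. \<forall>y. (\<forall>t. infdist (\<phi> t y) (Sing \<phi>) < \<eta>) \<longrightarrow> y \<in> Sing \<phi>"
    proof (rule ccontr)
      assume nc: "\<not> (\<exists>\<eta>>0. \<forall>y. (\<forall>t. infdist (\<phi> t y) (Sing \<phi>) < \<eta>) \<longrightarrow> y \<in> Sing \<phi>)"
      have "\<exists>y. (\<forall>t. infdist (\<phi> t y) (Sing \<phi>) < 1/real (Suc n)) \<and> y \<notin> Sing \<phi>" for n
      proof -
        have "1/real (Suc n) > 0" by simp
        thus ?thesis using nc by blast
      qed
      then obtain Y where Y: "\<And>n t. infdist (\<phi> t (Y n)) (Sing \<phi>) < 1/real (Suc n)"
        "\<And>n. Y n \<notin> Sing \<phi>" by metis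
      have Y0: "infdist (Y n) (Sing \<phi>) < 1/real (Suc n)" for n using Y(1)[of 0 n] by simp
      obtain \<delta> where \<delta>: "\<delta>>0" "\<forall>x\<in>UNIV - Sing \<phi>. \<forall>y\<in>UNIV - Sing \<phi>. \<forall>s :: real \<Rightarrow> real.
        continuous_on UNIV s \<and> s 0 = 0 \<and> (\<forall>t. dist (\<phi> t x) (\<phi> (s t) y) \<le> \<delta>)
        \<longrightarrow> y \<in> (\<lambda>t. \<phi> t x) ` {-1..1}"
        using assms(3)[unfolded expansive_on_def, rule_format, OF zero_less_one] by blast
      have exp: "\<exists>u\<in>{-1..1}. y = \<phi> u x"
        if "x \<notin> Sing \<phi>" "y \<notin> Sing \<phi>" "\<forall>t. dist (\<phi> t x) (\<phi> t y) \<le> \<delta>" for x y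
      proof -
        have "continuous_on UNIV (\<lambda>t::real. t) \<and> (\<lambda>t::real. t) 0 = 0 \<and>
            (\<forall>t. dist (\<phi> t x) (\<phi> ((\<lambda>t. t) t) y) \<le> \<delta>)"
          using that(3) by (simp add: continuous_on_id')
        hence "y \<in> (\<lambda>t. \<phi> t x) ` {-1..1}"
          using \<delta>(2) that(1,2) by blast
        thus ?thesis by blast
      qed
      have "\<delta>/4 > 0" using \<delta> by simp
      then obtain \<eta> where \<eta>: "\<eta>>0" "\<And>z. infdist z (Sing \<phi>) < \<eta> \<Longrightarrow> \<forall>c\<in>{0..4}. dist (\<phi> c z) z < \<delta>/4"
        using motion[OF assms(2) assms(1) ne] by blast
      have L: "\<forall>t. dist (\<phi> t y) y < \<delta>/4"
        if y: "y \<notin> Sing \<phi>" and h: "\<forall>t. infdist (\<phi> t y) (Sing \<phi>) < \<eta>" for y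
      proof -
        have mv: "dist (\<phi> c (\<phi> t y)) (\<phi> t y) < \<delta>/4" if "c \<in> {0..4}" for c t using \<eta>(2) h that by blast
        have "\<forall>t. dist (\<phi> t y) (\<phi> t (\<phi> 3 y)) \<le> \<delta>"
        proof
          fix t
          have "dist (\<phi> 3 (\<phi> t y)) (\<phi> t y) < \<delta>/4" using mv[of 3 t] by simp
          thus "dist (\<phi> t y) (\<phi> t (\<phi> 3 y)) \<le> \<delta>" using \<delta>(1) by (simp add: comm dist_commute)
        qed
        then obtain u where u: "u \<in> {-1..1}" "\<phi> 3 y = \<phi> u y" using exp[OF y notSing[OF y]] by blast
        have "\<phi> (3 - u) y = \<phi> (-u) (\<phi> 3 y)" by (simp add: add[symmetric])
        hence P: "\<phi> (3 - u) y = y" using u(2) by simp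
        show "\<forall>t. dist (\<phi> t y) y < \<delta>/4"
        proof
          fix t
          have "3 - u > 0" using u(1) by simp
          then obtain c where c: "c \<in> {0..3-u}" "\<phi> t y = \<phi> c y" using periodic_orbit[OF P] by blast
          have "c \<in> {0..4}" using c u by auto
          thus "dist (\<phi> t y) y < \<delta>/4" using mv[of c 0] c by simp
        qed
      qed
      have "seq_compact (UNIV::'a set)" using assms(1) compact_imp_seq_compact by blast
      then obtain p r where r: "strict_mono r" "(Y \<circ> r) \<longlonglongrightarrow> p" unfolding seq_compact_def by blast
      have lim0: "(\<lambda>n. 1 / real (Suc (r n))) \<longlonglongrightarrow> 0"
        using LIMSEQ_subseq_LIMSEQ[OF LIMSEQ_inverse_real_of_nat r(1)] by (simp add: o_def inverse_eq_divide)
      have "\<delta>/8 > 0" using \<delta> by simp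
      have ev1: "eventually (\<lambda>n. dist ((Y\<circ>r) n) p < \<delta>/8) sequentially"
        by (rule tendstoD[OF r(2)]) (use \<delta> in simp)
      have ev2: "eventually (\<lambda>n. 1/real(Suc(r n)) < \<eta>) sequentially"
        by (rule order_tendstoD(2)[OF lim0 \<eta>(1)])
      obtain N where N: "\<And>n. n \<ge> N \<Longrightarrow> dist (Y (r n)) p < \<delta>/8 \<and> 1/real(Suc(r n)) < \<eta>"
        using eventually_conj[OF ev1 ev2] unfolding eventually_sequentially by auto
      define y where "y = Y (r N)"
      have yS: "y \<notin> Sing \<phi>" by (simp add: y_def Y(2))
      have d: "infdist y (Sing \<phi>) > 0"
        using yS in_closed_iff_infdist_zero[OF closed_Sing ne] infdist_nonneg by (metis less_eq_real_def)
      obtain M0 where M0: "\<And>n. n \<ge> M0 \<Longrightarrow> 1/real(Suc(r n)) < infdist y (Sing \<phi>)"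
        using order_tendstoD(2)[OF lim0 d] unfolding eventually_sequentially by auto
      define M where "M = max N M0"
      define y' where "y' = Y (r M)"
      have y'S: "y' \<notin> Sing \<phi>" by (simp add: y'_def Y(2))
      have hy: "\<forall>t. infdist (\<phi> t y) (Sing \<phi>) < \<eta>"
        using Y(1)[of _ "r N"] N[of N] unfolding y_def by (meson le_refl less_trans)
      have hy': "\<forall>t. infdist (\<phi> t y') (Sing \<phi>) < \<eta>"
        using Y(1)[of _ "r M"] N[of M] unfolding y'_def M_def by (meson max.cobounded1 less_trans)
      have Ly: "\<forall>t. dist (\<phi> t y) y < \<delta>/4" using L[OF yS hy] .
      have Ly': "\<forall>t. dist (\<phi> t y') y' < \<delta>/4" using L[OF y'S hy'] .
      have "dist y p < \<delta>/8" using N[of N] by (simp add: y_def)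
      moreover have "dist y' p < \<delta>/8" using N[of M] by (simp add: y'_def M_def)
      ultimately have dyy: "dist y' y < \<delta>/4" using dist_triangle3[of y' y p] by (simp add: dist_commute)
      have "\<forall>t. dist (\<phi> t y') (\<phi> t y) \<le> \<delta>"
      proof
        fix t
        have "dist (\<phi> t y') (\<phi> t y) \<le> dist (\<phi> t y') y' + dist y' (\<phi> t y)" by (rule dist_triangle)
        moreover have "dist y' (\<phi> t y) \<le> dist y' y + dist y (\<phi> t y)" by (rule dist_triangle)
        moreover have "dist y (\<phi> t y) < \<delta>/4" using Ly by (simp add: dist_commute)
        ultimately show "dist (\<phi> t y') (\<phi> t y) \<le> \<delta>" using Ly'[rule_format, of t] dyy \<delta>(1) by linarith
      qed
      then obtain u where u: "y = \<phi> u y'" using exp[OF y'S yS] by blast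
      have a: "infdist y (Sing \<phi>) < 1/real (Suc (r M))" using Y(1)[of u "r M"] u by (simp add: y'_def)
      have b: "1/real (Suc (r M)) < infdist y (Sing \<phi>)" using M0[of M] by (simp add: M_def)
      from a b show False by linarith
    qed
    then obtain \<eta> where \<eta>: "\<eta>>0" "\<And>y. (\<forall>t. infdist (\<phi> t y) (Sing \<phi>) < \<eta>) \<Longrightarrow> y \<in> Sing \<phi>" by blast
    define U where "U = {x. infdist x (Sing \<phi>) < \<eta>}"
    have "open U" unfolding U_def
      by (intro open_Collect_less continuous_on_infdist continuous_on_id continuous_on_const)
    hence "interior U = U" by (rule interior_open)
    moreover have SU: "Sing \<phi> \<subseteq> U" using \<eta>(1) by (auto simp: U_def)
    moreover have "(\<Inter>t. \<phi> t ` U) \<subseteq> Sing \<phi>"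
    proof
      fix y assume y: "y \<in> (\<Inter>t. \<phi> t ` U)"
      have "\<phi> t y \<in> U" for t
      proof -
        from y obtain u where "u \<in> U" "y = \<phi> (-t) u" by blast
        thus ?thesis by simp
      qed
      thus "y \<in> Sing \<phi>" using \<eta>(2) by (auto simp: U_def)
    qed
    moreover have "Sing \<phi> \<subseteq> (\<Inter>t. \<phi> t ` U)"
    proof
      fix p assume p: "p \<in> Sing \<phi>"
      show "p \<in> (\<Inter>t. \<phi> t ` U)"
      proof
        fix t show "p \<in> \<phi> t ` U"
          using p SU by (intro image_eqI[where x=p]) (auto simp: Sing_def)
      qed
    qed
    ultimately show ?thesis by (intro exI[of _ U]) auto
  qed
  show ?thesis unfolding dynamically_isolated_def using cS inv key by blast
qed

end
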